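(* Let $N \ge 1$ be an integer and let $0 < \delta < \frac{1}{N}$. For $\alpha > 0$, let $Q_{\vec{p}^*(\alpha)}:\mathbb{R}\to\mathbb{R}$ be the $N$-level scalar quantizer that maps each $x \in \mathbb{R}$ to the nearest point of $\{\frac{(2k-1)\alpha}{2N} : k = 1,\dots,N\}$. Equivalently, it partitions $(0,\alpha)$ into $N$ consecutive intervals of equal length $\alpha/N$ and reconstructs each cell by its midpoint; points below $0$ go to the first midpoint and points above $\alpha$ go to the last midpoint. For an $N$-level scalar quantizer $Q$ (a measurable map $\mathbb{R}\to\mathbb{R}$ whose range consists of $N$ points), define $$D(\alpha, Q) := \mathbb{E}_{X\sim \mathrm{Unif}(0,\alpha)}\big[(X-Q(X))^2\big], \qquad V(Q) := \max_{\alpha \in \{1, 1+\delta\}} D(\alpha, Q).$$ Then $$V\big(Q_{\vec{p}^*(1+\delta)}\big) < V\big(Q_{\vec{p}^*(1)}\big).$$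
   Context: $\mathrm{Unif}(0,\alpha)$ denotes the uniform distribution on $(0,\alpha)$. $D(\alpha,Q)$ is the expected squared-error distortion of quantizer $Q$ on the source $\mathrm{Unif}(0,\alpha)$. $V(Q)$ is the worst-case distortion over the two sources $\mathrm{Unif}(0,1)$ and $\mathrm{Unif}(0,1+\delta)$. *)

theory Defs
  imports "HOL-Analysis.Analysis" "HOL-Probability.Probability"
begin

definition midpt :: "nat \<Rightarrow> real \<Rightarrow> nat \<Rightarrow> real" where
  "midpt N \<alpha> k = (2 * real k - 1) * \<alpha> / (2 * real N)"

(* nearest-point quantizer Q_{p*(alpha)}; ties (a null set) go to the smaller index *)
definition Qstar :: "nat \<Rightarrow> real \<Rightarrow> real \<Rightarrow> real" where
  "Qstar N \<alpha> x = midpt N \<alpha>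
     (LEAST k. k \<in> {1..N} \<and> (\<forall>j\<in>{1..N}. \<bar>x - midpt N \<alpha> k\<bar> \<le> \<bar>x - midpt N \<alpha> j\<bar>))"

definition distortion :: "real \<Rightarrow> (real \<Rightarrow> real) \<Rightarrow> real" where
  "distortion \<alpha> Q = (\<integral>x. (x - Q x)^2 \<partial>(uniform_measure lborel {0<..<\<alpha>}))"

definition worst_distortion :: "real \<Rightarrow> (real \<Rightarrow> real) \<Rightarrow> real" where
  "worst_distortion \<delta> Q = max (distortion 1 Q) (distortion (1 + \<delta>) Q)"

end

theory Submission
  imports Defs
begin

lemma dist_HK:
  fixes f :: "real \<Rightarrow> real"
  assumes a: "\<alpha> > 0" and fm: "f \<in> borel_measurable borel"
    and hi: "(f has_integral I) {0..\<alpha>}" and nn: "\<And>x. 0 \<le> f x"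
  shows "integral\<^sup>L (uniform_measure lborel {0<..<\<alpha>}) f = I / \<alpha>"
proof -
  let ?A = "{0<..<\<alpha>}"
  have em: "emeasure lborel ?A = ennreal \<alpha>" using a by simp
  have "uniform_measure lborel ?A = density lborel (\<lambda>x. ennreal (indicator ?A x / \<alpha>))"
    unfolding uniform_measure_def em
    by (intro arg_cong[where f="density lborel"] ext)
       (use a in \<open>auto simp: divide_ennreal[symmetric] indicator_def\<close>)
  then have "integral\<^sup>L (uniform_measure lborel ?A) f = integral\<^sup>L lborel (\<lambda>x. (indicator ?A x / \<alpha>) *\<^sub>R f x)"
    using fm a by (simp add: integral_density)
  also have "\<dots> = integral\<^sup>L lborel (\<lambda>x. (1/\<alpha>) * (indicator ?A x *\<^sub>R f x))"
    by (intro Bochner_Integration.integral_cong) auto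
  also have "\<dots> = (1/\<alpha>) * set_lebesgue_integral lborel ?A f"
    unfolding set_lebesgue_integral_def by simp
  also have "set_lebesgue_integral lborel ?A f = integral ?A f"
  proof (rule set_borel_integral_eq_integral(2))
    have hi2: "(f has_integral I) ?A"
      using hi has_integral_open_interval[of f I 0 \<alpha>] by simp
    then have "f absolutely_integrable_on ?A"
      using nn by (intro nonnegative_absolutely_integrable_1) (auto simp: integrable_on_def)
    then have "integrable lebesgue (\<lambda>x. indicator ?A x *\<^sub>R f x)"
      by (simp add: set_integrable_def)
    moreover have "(\<lambda>x. indicator ?A x *\<^sub>R f x) \<in> borel_measurable lborel"
      using fm by measurable
    ultimately show "set_integrable lborel ?A f"
      unfolding set_integrable_def using integrable_completion by blast
  qed
  also have "integral ?A f = I"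
    using hi has_integral_open_interval[of f I 0 \<alpha>] by (simp add: integral_unique)
  finally show ?thesis by simp
qed


lemma Qstar_eq:
  assumes k: "k \<in> {1..N}"
    and strict: "\<And>j. j \<in> {1..N} \<Longrightarrow> j \<noteq> k \<Longrightarrow> \<bar>x - midpt N a k\<bar> < \<bar>x - midpt N a j\<bar>"
  shows "Qstar N a x = midpt N a k"
proof -
  have "(LEAST k. k \<in> {1..N} \<and> (\<forall>j\<in>{1..N}. \<bar>x - midpt N a k\<bar> \<le> \<bar>x - midpt N a j\<bar>)) = k"
  proof (rule Least_equality)
    show "k \<in> {1..N} \<and> (\<forall>j\<in>{1..N}. \<bar>x - midpt N a k\<bar> \<le> \<bar>x - midpt N a j\<bar>)"
      using k strict by (metis order_le_less order_refl)
  next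
    fix y assume "y \<in> {1..N} \<and> (\<forall>j\<in>{1..N}. \<bar>x - midpt N a y\<bar> \<le> \<bar>x - midpt N a j\<bar>)"
    then have "y = k" using k strict by (metis not_le)
    then show "k \<le> y" by simp
  qed
  then show ?thesis unfolding Qstar_def by simp
qed

lemma absL: fixes A B x h :: real
  shows "B \<le> A - h \<Longrightarrow> A - h/2 < x \<Longrightarrow> 0 < h \<Longrightarrow> \<bar>x - A\<bar> < \<bar>x - B\<bar>"
  by (simp add: abs_if) 
lemma absR: fixes A B x h :: real
  shows "A + h \<le> B \<Longrightarrow> x < A + h/2 \<Longrightarrow> 0 < h \<Longrightarrow> \<bar>x - A\<bar> < \<bar>x - B\<bar>"
  by (simp add: abs_if) 

lemma midpt_alt: "N \<ge> 1 \<Longrightarrow> midpt N a j = (real j - 1/2) * (a / real N)"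
  unfolding midpt_def by (simp add: field_simps)

lemma Qstar_cell:
  assumes N: "N \<ge> 1" and a: "a > 0" and k: "1 \<le> k" "k \<le> N"
    and lo: "(real k - 1) * (a / real N) < x" and hi: "x < real k * (a / real N) \<or> k = N"
  shows "Qstar N a x = midpt N a k"
proof (rule Qstar_eq)
  show "k \<in> {1..N}" using k by simp
  define h where "h = a / real N"
  have h: "h > 0" using N a by (simp add: h_def)
  fix j assume j: "j \<in> {1..N}" "j \<noteq> k"
  have mk: "midpt N a k = (real k - 1/2) * h" and mj: "midpt N a j = (real j - 1/2) * h"
    using N by (simp_all add: midpt_alt h_def)
  show "\<bar>x - midpt N a k\<bar> < \<bar>x - midpt N a j\<bar>"
  proof (cases "j < k")
    case True
    then have "real j \<le> real k - 1" by linarith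
    then have "1 * h \<le> (real k - real j) * h"
      using h by (intro mult_right_mono) auto
    then have "(real j - 1/2) * h \<le> (real k - 1/2) * h - h"
      by (simp add: algebra_simps)
    moreover have "(real k - 1) * h = (real k - 1/2) * h - h/2" by (simp add: algebra_simps)
    ultimately show ?thesis using lo h unfolding mk mj h_def[symmetric] by (intro absL) auto
  next
    case False
    then have "k < j" using j by simp
    then have kN: "k \<noteq> N" using j by simp
    have "real k + 1 \<le> real j" using \<open>k < j\<close> by linarith
    then have "1 * h \<le> (real j - real k) * h"
      using h by (intro mult_right_mono) auto
    then have "(real k - 1/2) * h + h \<le> (real j - 1/2) * h"
      by (simp add: algebra_simps)
    moreover have "x < real k * h" using hi kN by (simp add: h_def)
    moreover have "real k * h = (real k - 1/2) * h + h/2" by (simp add: algebra_simps)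
    moreover have "(real k - 1) * h = (real k - 1/2) * h - h/2" by (simp add: algebra_simps)
    ultimately show ?thesis using lo h unfolding mk mj h_def[symmetric] by (intro absR) auto
  qed
qed

lemma piece:
  fixes g :: "real \<Rightarrow> real"
  assumes "lo \<le> hi" and "\<And>x. lo < x \<Longrightarrow> x < hi \<Longrightarrow> g x = c"
  shows "((\<lambda>x. (x - g x)^2) has_integral ((hi - c)^3/3 - (lo - c)^3/3)) {lo..hi}"
proof -
  have F: "((\<lambda>x. (x - c)^2) has_integral ((hi - c)^3/3 - (lo - c)^3/3)) {lo..hi}"
  proof (rule fundamental_theorem_of_calculus[OF assms(1), where f="\<lambda>x. (x - c)^3/3"])
    fix x assume "x \<in> {lo..hi}"
    show "((\<lambda>x. (x - c)^3/3) has_vector_derivative (x - c)^2) (at x within {lo..hi})"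
      unfolding has_real_derivative_iff_has_vector_derivative[symmetric]
      by (rule derivative_eq_intros refl | simp add: power2_eq_square)+
  qed
  then show ?thesis
    by (intro has_integral_spike_finite[where S="{lo,hi}", OF _ _ F]) (use assms(2) in auto)
qed

lemma prefix_int:
  assumes N: "N \<ge> 1" and a: "a > 0"
  shows "k + 1 \<le> N \<Longrightarrow> ((\<lambda>x. (x - Qstar N a x)^2) has_integral (real k * (a / real N)^3 / 12)) {0..real k * (a / real N)}"
proof (induction k)
  case 0
  show ?case using has_integral_refl(2)[of "\<lambda>x. (x - Qstar N a x)^2" 0] by simp
next
  case (Suc k)
  define h where "h = a / real N"
  have h: "h > 0" using N a by (simp add: h_def)
  have IH: "((\<lambda>x. (x - Qstar N a x)^2) has_integral (real k * h^3 / 12)) {0..real k * h}"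
    using Suc by (simp add: h_def)
  have P: "((\<lambda>x. (x - Qstar N a x)^2) has_integral
      ((real (Suc k) * h - (real (Suc k) - 1/2) * h)^3/3 - (real k * h - (real (Suc k) - 1/2) * h)^3/3))
      {real k * h..real (Suc k) * h}"
  proof (rule piece)
    show "real k * h \<le> real (Suc k) * h" using h by (simp add: algebra_simps)
    fix x assume "real k * h < x" "x < real (Suc k) * h"
    then show "Qstar N a x = (real (Suc k) - 1/2) * h"
      using Qstar_cell[OF N a, of "Suc k" x] Suc.prems N
      by (simp add: midpt_alt h_def)
  qed
  have e: "(real (Suc k) * h - (real (Suc k) - 1/2) * h)^3/3 - (real k * h - (real (Suc k) - 1/2) * h)^3/3
     = h^3/12" by (simp add: algebra_simps power3_eq_cube)
  have "((\<lambda>x. (x - Qstar N a x)^2) has_integral (real k * h^3 / 12 + h^3/12)) {0..real (Suc k) * h}"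
    by (rule has_integral_combine[OF _ _ IH P[unfolded e]]) (use h in \<open>auto simp: algebra_simps\<close>)
  moreover have eq: "real k * h^3/12 + h^3/12 = real (Suc k) * h^3/12" by (simp add: algebra_simps)
  ultimately show ?case by (simp only: h_def)
qed

definition FF :: "nat \<Rightarrow> real \<Rightarrow> real \<Rightarrow> real" where
  "FF N a b = (real N - 1) * (a / real N)^3 / 12
     + ((b - (real N - 1/2) * (a / real N))^3 / 3 + (a / real N)^3 / 24)"

lemma full_int:
  assumes N: "N \<ge> 1" and a: "a > 0" and b: "(real N - 1) * (a / real N) \<le> b"
  shows "((\<lambda>x. (x - Qstar N a x)^2) has_integral FF N a b) {0..b}"
proof -
  define h where "h = a / real N"
  have h: "h > 0" using N a by (simp add: h_def)
  have I1: "((\<lambda>x. (x - Qstar N a x)^2) has_integral (real (N-1) * h^3 / 12)) {0..real (N-1) * h}"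
    using prefix_int[OF N a, of "N-1"] N by (simp add: h_def)
  have rN: "real (N-1) = real N - 1" using N by simp
  have P: "((\<lambda>x. (x - Qstar N a x)^2) has_integral
      ((b - (real N - 1/2) * h)^3/3 - ((real N - 1) * h - (real N - 1/2) * h)^3/3)) {(real N - 1) * h..b}"
  proof (rule piece)
    show "(real N - 1) * h \<le> b" using b by (simp add: h_def)
    fix x assume "(real N - 1) * h < x" "x < b"
    then show "Qstar N a x = (real N - 1/2) * h"
      using Qstar_cell[OF N a, of N x] N by (simp add: midpt_alt h_def)
  qed
  have e: "(b - (real N - 1/2) * h)^3/3 - ((real N - 1) * h - (real N - 1/2) * h)^3/3 = (b - (real N - 1/2) * h)^3/3 + h^3/24"
    by (simp add: algebra_simps power3_eq_cube)
  have "((\<lambda>x. (x - Qstar N a x)^2) has_integral ((real N - 1) * h^3 / 12 + ((b - (real N - 1/2) * h)^3/3 + h^3/24))) {0..b}"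
  proof (rule has_integral_combine[OF _ _ I1[unfolded rN] P[unfolded e]])
    show "0 \<le> (real N - 1) * h" using N h by simp
    show "(real N - 1) * h \<le> b" using b by (simp add: h_def)
  qed
  then show ?thesis unfolding FF_def h_def .
qed


lemma polyB:
  fixes x u :: real assumes x: "0 < x" "x \<le> 1" and u: "0 < u" "u < 1"
  shows "0 < 1/6 + 2/3*u^2 - x*u^2 + 1/4*x*u + 1/3*x*u^3 + 5/12*x^2*u^2 - 1/2*x^2*u^3 + 1/6*x^3*u^3"
proof -
  have a1: "x*u^2 \<le> x*u" using x u by (simp add: power2_eq_square mult_left_le)
  have a2: "x*u^2 \<le> u^2" using x u by (simp add: mult_left_le_one_le)
  have a3: "x^2*u^3 \<le> x^2*u^2" using x u by (simp add: power2_eq_square power3_eq_cube mult_left_le)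
  have a4: "x^2*u^2 \<le> u^2" using x u by (simp add: power2_eq_square mult_le_one)
  have a5: "u^2 < 1" using u by (simp add: power_less_one_iff)
  have a6: "0 < x*u^3" "0 \<le> x^3*u^3" using x u by simp_all
  show ?thesis using a1 a2 a3 a4 a5 a6 by linarith
qed
lemma ineq1:
  fixes x u :: real assumes x: "0 < x" "x \<le> 1" and u: "0 < u" "u < 1"
  defines "d \<equiv> x * u"
  shows "(1 + d) * ((x^2 - x^3)*(1+d)^3/12 + (1 - (1+d) + (1+d)*x/2)^3/3 + (1+d)^3*x^3/24)
       < (x^2 - x^3)/12 + ((1+d) - 1 + x/2)^3/3 + x^3/24"
proof -
  have "((x^2 - x^3)/12 + ((1+d) - 1 + x/2)^3/3 + x^3/24) - (1 + d) * ((x^2 - x^3)*(1+d)^3/12 + (1 - (1+d) + (1+d)*x/2)^3/3 + (1+d)^3*x^3/24)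
    = x^3 * u * (1/6 + 2/3*u^2 - x*u^2 + 1/4*x*u + 1/3*x*u^3 + 5/12*x^2*u^2 - 1/2*x^2*u^3 + 1/6*x^3*u^3)"
    unfolding d_def by (simp add: field_simps power2_eq_square power3_eq_cube)
  moreover have "0 < x^3 * u * (1/6 + 2/3*u^2 - x*u^2 + 1/4*x*u + 1/3*x*u^3 + 5/12*x^2*u^2 - 1/2*x^2*u^3 + 1/6*x^3*u^3)"
    using polyB[OF x u] x u by simp
  ultimately show ?thesis by linarith
qed
lemma ineq2:
  fixes x d :: real assumes x: "0 < x" "x \<le> 1" and d: "0 < d"
  shows "(x^2 - x^3)*(1+d)^3/12 + ((1+d) - (1+d) + (1+d)*x/2)^3/3 + (1+d)^3*x^3/24
       < (x^2 - x^3)/12 + ((1+d) - 1 + x/2)^3/3 + x^3/24"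
proof -
  have "((x^2 - x^3)/12 + ((1+d) - 1 + x/2)^3/3 + x^3/24) - ((x^2 - x^3)*(1+d)^3/12 + ((1+d) - (1+d) + (1+d)*x/2)^3/3 + (1+d)^3*x^3/24)
     = d^2*x*(1/2 - x/4) + d^3*(1/3 - x^2/12)"
    by (simp add: field_simps power2_eq_square power3_eq_cube)
  moreover have "0 < d^2*x*(1/2 - x/4)" using x d by simp
  moreover have "x^2 \<le> 1" using x by (simp add: power_le_one)
  then have "0 < d^3*(1/3 - x^2/12)" using d by simp
  ultimately show ?thesis by linarith
qed

lemma Qstar_meas: "Qstar N a \<in> borel_measurable borel"
proof -
  have "(\<lambda>x. LEAST k. k \<in> {1..N} \<and> (\<forall>j\<in>{1..N}. \<bar>x - midpt N a k\<bar> \<le> \<bar>x - midpt N a j\<bar>)) \<in> measurable borel (count_space UNIV)"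
    by (rule measurable_Least) measurable
  then show ?thesis unfolding Qstar_def[abs_def] by measurable
qed

lemma f_meas: "(\<lambda>x. (x - Qstar N a x)^2) \<in> borel_measurable borel"
  using Qstar_meas by measurable

lemma dist_eq:
  assumes N: "N \<ge> 1" and a: "a > 0" and b: "b > 0" "(real N - 1) * (a / real N) \<le> b"
  shows "distortion b (Qstar N a) = FF N a b / b"
  unfolding distortion_def
  by (rule dist_HK[OF b(1) f_meas full_int[OF N a b(2)]]) simp

lemma FF_alt:
  assumes N: "N \<ge> 1"
  shows "FF N a b = ((1/real N)^2 - (1/real N)^3)*a^3/12 + (b - a + a*(1/real N)/2)^3/3 + a^3*(1/real N)^3/24"
proof -
  have "real N > 0" using N by simp
  then show ?thesis unfolding FF_def by (simp add: field_simps power2_eq_square power3_eq_cube)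
qed

theorem lemma2:
  fixes N :: nat and \<delta> :: real
  assumes "N \<ge> 1" and "0 < \<delta>" and "\<delta> < 1 / real N"
  shows "worst_distortion \<delta> (Qstar N (1 + \<delta>)) < worst_distortion \<delta> (Qstar N 1)"
proof -
  note N = assms(1)
  have Np: "real N > 0" "real N \<ge> 1" using N by simp_all
  define x where "x = 1 / real N"
  define u where "u = \<delta> * real N"
  have x: "0 < x" "x \<le> 1" using Np by (simp_all add: x_def)
  have u: "0 < u" "u < 1" using assms Np by (simp_all add: u_def field_simps)
  have dxu: "\<delta> = x * u" using Np by (simp add: x_def u_def)
  have c1: "(real N - 1) * ((1 + \<delta>) / real N) \<le> 1"
  proof -
    have "(real N - 1) * \<delta> \<le> 1" using assms Np by (simp add: field_simps)
    then show ?thesis using Np by (simp add: field_simps)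
  qed
  have c2: "(real N - 1) * ((1 + \<delta>) / real N) \<le> 1 + \<delta>"
    using c1 assms by linarith
  have c3: "(real N - 1) * (1 / real N) \<le> 1 + \<delta>"
    using Np assms by (simp add: field_simps)
  have D1: "distortion 1 (Qstar N (1 + \<delta>)) = FF N (1+\<delta>) 1"
    using dist_eq[OF N _ _ c1] assms by simp
  have D2: "distortion (1 + \<delta>) (Qstar N (1 + \<delta>)) = FF N (1+\<delta>) (1+\<delta>) / (1 + \<delta>)"
    using dist_eq[OF N _ _ c2] assms by simp
  have D3: "distortion (1 + \<delta>) (Qstar N 1) = FF N 1 (1+\<delta>) / (1 + \<delta>)"
    using dist_eq[OF N _ _ c3] assms by simp
  have i1: "(1 + \<delta>) * FF N (1+\<delta>) 1 < FF N 1 (1+\<delta>)"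
    unfolding FF_alt[OF N] x_def[symmetric] using ineq1[OF x u] unfolding dxu by simp
  have i2: "FF N (1+\<delta>) (1+\<delta>) < FF N 1 (1+\<delta>)"
    unfolding FF_alt[OF N] x_def[symmetric] using ineq2[OF x assms(2)] by simp
  have "worst_distortion \<delta> (Qstar N (1 + \<delta>)) < FF N 1 (1+\<delta>) / (1 + \<delta>)"
  proof -
    have p: "0 < 1 + \<delta>" using assms(2) by simp
    have "FF N (1+\<delta>) 1 < FF N 1 (1+\<delta>) / (1 + \<delta>)"
      using i1 p by (simp add: field_simps)
    moreover have "FF N (1+\<delta>) (1+\<delta>) / (1 + \<delta>) < FF N 1 (1+\<delta>) / (1 + \<delta>)"
      using i2 p by (simp add: divide_strict_right_mono)
    ultimately show ?thesis unfolding worst_distortion_def D1 D2 by simp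
  qed
  also have "\<dots> \<le> worst_distortion \<delta> (Qstar N 1)"
    unfolding worst_distortion_def D3 by simp
  finally show ?thesis .
qed

end
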